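(* Let $k\ge3$, $n\ge0$, $G\in\mathcal G_k(n)$, and let $v$ be a $G$-good vertex. Then $d_G(v)\le\delta_k(n)$.
   Context: $d_G(v)$ is the degree of vertex $v$ in the hypergraph $G$. For $k\ge3$, $n\ge0$, the family $\mathcal G_k(n)$ of $n$-vertex $k$-uniform hypergraphs is defined inductively: for $n<k$ it consists of the single edgeless $n$-vertex $k$-graph; for $n\ge k$, $G\in\mathcal G_k(n)$ if its vertex set $V$ has a partition $V=V_1\cup\dots\cup V_k$ (the defining partition) with $0\le|V_i|<n$ for all $i$, such that $G[V_i]\in\mathcal G_k(|V_i|)$ for each $i$, and the edges of $G$ are the edges of the $G[V_i]$ together with all $k$-sets having exactly one vertex in each $V_i$. $H_k(n)\in\mathcal G_k(n)$ is defined by: for $n<k$ it is the edgeless graph; for $n\ge k$ its defining partition is equitable ($||V_i|-|V_j||\le1$) and $H_k(n)[V_i]\cong H_k(|V_i|)$ for each $i$. A vertex $v$ of $G\in\mathcal G_k(n)$ is $G$-good if either $n<k$, or $n\ge k$ and, with defining partition $V_1\cup\dots\cup V_k$, $v$ lies in a part $V_i$ of maximum size and $v$ is $G[V_i]$-good. $\delta_k(n)$ denotes $d_{H_k(n)}(v)$ for an $H_k(n)$-good vertex $v$ (all $H_k(n)$-good vertices have the same degree). *)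

theory Defs
  imports Main
begin

definition deg :: "'a set set \<Rightarrow> 'a \<Rightarrow> nat" where
  "deg E v = card {e \<in> E. v \<in> e}"

definition induced :: "'a set set \<Rightarrow> 'a set \<Rightarrow> 'a set set" where
  "induced E S = {e \<in> E. e \<subseteq> S}"

definition is_part :: "nat \<Rightarrow> 'a set \<Rightarrow> (nat \<Rightarrow> 'a set) \<Rightarrow> bool" where
  "is_part k V P \<longleftrightarrow> (\<Union>i<k. P i) = V \<and>
     (\<forall>i<k. \<forall>j<k. i \<noteq> j \<longrightarrow> P i \<inter> P j = {}) \<and> (\<forall>i<k. card (P i) < card V)"

definition transversal :: "nat \<Rightarrow> 'a set \<Rightarrow> (nat \<Rightarrow> 'a set) \<Rightarrow> 'a set set" where
  "transversal k V P = {e. e \<subseteq> V \<and> card e = k \<and> (\<forall>i<k. card (e \<inter> P i) = 1)}"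

inductive inG :: "nat \<Rightarrow> 'a set \<Rightarrow> 'a set set \<Rightarrow> bool" for k where
  base: "finite V \<Longrightarrow> card V < k \<Longrightarrow> inG k V {}"
| step: "finite V \<Longrightarrow> k \<le> card V \<Longrightarrow> is_part k V P \<Longrightarrow>
         (\<forall>i<k. inG k (P i) (induced E (P i))) \<Longrightarrow>
         E = (\<Union>i<k. induced E (P i)) \<union> transversal k V P \<Longrightarrow> inG k V E"

inductive good :: "nat \<Rightarrow> 'a set \<Rightarrow> 'a set set \<Rightarrow> 'a \<Rightarrow> bool" for k where
  base: "finite V \<Longrightarrow> card V < k \<Longrightarrow> v \<in> V \<Longrightarrow> good k V {} v"
| step: "finite V \<Longrightarrow> k \<le> card V \<Longrightarrow> is_part k V P \<Longrightarrow>
         (\<forall>j<k. inG k (P j) (induced E (P j))) \<Longrightarrow>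
         E = (\<Union>j<k. induced E (P j)) \<union> transversal k V P \<Longrightarrow>
         i < k \<Longrightarrow> (\<forall>j<k. card (P j) \<le> card (P i)) \<Longrightarrow> v \<in> P i \<Longrightarrow>
         good k (P i) (induced E (P i)) v \<Longrightarrow> good k V E v"

text \<open>Concrete H_k(n) on vertex set {0..<n}: the equitable partition into consecutive intervals
  of sizes sz k n 0, ..., sz k n (k-1) starting at offsets off k n i.\<close>
definition sz :: "nat \<Rightarrow> nat \<Rightarrow> nat \<Rightarrow> nat" where
  "sz k n i = n div k + (if i < n mod k then 1 else 0)"

definition off :: "nat \<Rightarrow> nat \<Rightarrow> nat \<Rightarrow> nat" where
  "off k n i = (\<Sum>j<i. sz k n j)"

lemma sz_less: "3 \<le> k \<Longrightarrow> k \<le> n \<Longrightarrow> sz k n i < n"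
proof -
  assume a: "3 \<le> k" "k \<le> n"
  have "n div k \<le> n div 3" using a by (simp add: div_le_mono2)
  moreover have "n div 3 + 1 < n" using a by linarith
  ultimately show ?thesis unfolding sz_def by simp
qed

function Hk :: "nat \<Rightarrow> nat \<Rightarrow> nat set set" where
  "Hk k n = (if n < k \<or> k < 3 then {} else
     (\<Union>i<k. (\<lambda>e. (\<lambda>x. x + off k n i) ` e) ` Hk k (sz k n i)) \<union>
     transversal k {0..<n} (\<lambda>i. {off k n i..<off k n i + sz k n i}))"
  by auto
termination
  by (relation "measure (\<lambda>(k,n). n)") (auto intro: sz_less)

function goodH :: "nat \<Rightarrow> nat \<Rightarrow> nat \<Rightarrow> bool" where
  "goodH k n v = (if n < k \<or> k < 3 then v < n else
     (\<exists>i<k. (\<forall>j<k. sz k n j \<le> sz k n i) \<and> off k n i \<le> v \<and> v < off k n i + sz k n i \<and>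
        goodH k (sz k n i) (v - off k n i)))"
  by auto
termination
  by (relation "measure (\<lambda>(k,n,v). n)") (auto intro: sz_less)

definition delta :: "nat \<Rightarrow> nat \<Rightarrow> nat" where
  "delta k n = deg (Hk k n) (SOME v. goodH k n v)"

end

theory Submission
  imports Defs "HOL-Library.FuncSet"
begin


declare Hk.simps[simp del] goodH.simps[simp del]

definition cc :: "nat \<Rightarrow> nat \<Rightarrow> nat" where "cc k n = sz k n 0"

lemma cc_ge: assumes "0 < k" shows "n \<le> k * cc k n"
proof -
  have n: "n = k * (n div k) + n mod k" by simp
  have "n mod k < k" using assms by simp
  then have "n \<le> k * (n div k) + k" using n by linarith
  moreover have "n mod k = 0 \<Longrightarrow> n \<le> k * (n div k)" using n by simp
  ultimately show ?thesis unfolding cc_def sz_def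
    by (cases "0 < n mod k") (simp_all add: algebra_simps)
qed

lemma cc_le: assumes "0 < k" "n \<le> k * b" shows "cc k n \<le> b"
proof -
  have n: "n = k * (n div k) + n mod k" by simp
  have "n div k \<le> b" using assms by (metis div_le_mono nonzero_mult_div_cancel_left not_gr0)
  moreover have "0 < n mod k \<Longrightarrow> n div k < b"
  proof (rule ccontr)
    assume "0 < n mod k" "\<not> n div k < b"
    then have "k * b \<le> k * (n div k)" by simp
    then show False using n assms \<open>0 < n mod k\<close> by linarith
  qed
  ultimately show ?thesis unfolding cc_def sz_def by auto
qed

lemma cc_mono: "0 < k \<Longrightarrow> a \<le> n \<Longrightarrow> cc k a \<le> cc k n"
  using cc_ge cc_le le_trans by blast

lemma cc_shift: assumes "0 < k" "a \<le> n" shows "cc k n \<le> cc k a + (n - a)"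
proof -
  have "a \<le> k * cc k a" using cc_ge assms by blast
  moreover have "n - a \<le> k * (n - a)" using assms by simp
  moreover have "k * (cc k a + (n - a)) = k * cc k a + k * (n - a)" by (simp add: distrib_left)
  ultimately have "n \<le> k * (cc k a + (n - a))" using assms by linarith
  then show ?thesis using cc_le assms by blast
qed

lemma cc_small: assumes "3 \<le> k" "k \<le> a" shows "cc k a + 2 \<le> a"
proof -
  have "a \<le> k * (a - 2)"
  proof -
    have "3 * (a - 2) \<le> k * (a - 2)" using assms by simp
    moreover have "a \<le> 3 * (a - 2)" using assms by linarith
    ultimately show ?thesis by linarith
  qed
  then have "cc k a \<le> a - 2" using cc_le assms by simp
  then show ?thesis using assms by linarith
qed

lemma cc_pos: "0 < k \<Longrightarrow> 0 < n \<Longrightarrow> 0 < cc k n"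
  using cc_ge by (metis gr0I le_zero_eq mult_0_right)



definition Pp :: "nat \<Rightarrow> nat \<Rightarrow> nat" where
  "Pp h m = (m div h) ^ (h - m mod h) * (Suc (m div h)) ^ (m mod h)"
definition Dl :: "nat \<Rightarrow> nat \<Rightarrow> nat" where
  "Dl h m = (m div h) ^ (h - Suc (m mod h)) * (Suc (m div h)) ^ (m mod h)"

lemma Pp_qr: "r < h \<Longrightarrow> Pp h (q * h + r) = q ^ (h - r) * Suc q ^ r"
  unfolding Pp_def by simp
lemma Dl_qr: "r < h \<Longrightarrow> Dl h (q * h + r) = q ^ (h - Suc r) * Suc q ^ r"
  unfolding Dl_def by simp

lemma Pp_Dl_Suc: assumes "0 < h" shows "Pp h (Suc m) = Pp h m + Dl h m \<and> Dl h m \<le> Dl h (Suc m)"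
proof -
  define q r where "q = m div h" and "r = m mod h"
  have m: "m = q * h + r" and r: "r < h" using assms by (simp_all add: q_def r_def)
  show ?thesis
  proof (cases "Suc r < h")
    case True
    have sm: "Suc m = q * h + Suc r" using m by simp
    have e1: "h - r = Suc (h - Suc r)" using True by simp
    have e2: "h - Suc r = Suc (h - Suc (Suc r))" using True by simp
    have "Pp h (Suc m) = q ^ (h - Suc r) * Suc q ^ Suc r" unfolding sm by (rule Pp_qr[OF True])
    moreover have "Pp h m = q * q ^ (h - Suc r) * Suc q ^ r" using m Pp_qr r e1 by simp
    moreover have "Dl h m = q ^ (h - Suc r) * Suc q ^ r" using m Dl_qr r by simp
    moreover have "Dl h (Suc m) = q ^ (h - Suc (Suc r)) * Suc q ^ Suc r" unfolding sm by (rule Dl_qr[OF True])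
    moreover have "q ^ (h - Suc r) * Suc q ^ r = q * q ^ (h - Suc (Suc r)) * Suc q ^ r"
      using e2 by simp
    moreover have "q * q ^ (h - Suc (Suc r)) * Suc q ^ r \<le> Suc q * q ^ (h - Suc (Suc r)) * Suc q ^ r"
      by simp
    ultimately show ?thesis by (simp add: algebra_simps)
  next
    case False
    then have hr: "h = Suc r" using r by simp
    have sm: "Suc m = Suc q * h + 0" using m hr by simp
    have "Pp h (Suc m) = Suc q ^ h" using sm Pp_qr[of 0 h "Suc q"] assms by simp
    moreover have "Pp h m = q ^ (h - r) * Suc q ^ r" unfolding m by (rule Pp_qr[OF r])
    moreover have "Dl h m = q ^ (h - Suc r) * Suc q ^ r" unfolding m by (rule Dl_qr[OF r])
    moreover have "Dl h (Suc m) = Suc q ^ (h - Suc 0) * Suc (Suc q) ^ 0" unfolding sm by (rule Dl_qr[OF assms])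
    ultimately show ?thesis using hr by simp
  qed
qed

lemma Pp_Suc: "0 < h \<Longrightarrow> Pp h (Suc m) = Pp h m + Dl h m"
  using Pp_Dl_Suc by blast

lemma Dl_mono: assumes "0 < h" "x \<le> y" shows "Dl h x \<le> Dl h y"
proof -
  have "\<And>n. Dl h n \<le> Dl h (Suc n)" using Pp_Dl_Suc[OF assms(1)] by blast
  from lift_Suc_mono_le[of "Dl h", OF this assms(2)] show ?thesis .
qed

lemma Pp_mono: assumes "0 < h" "x \<le> y" shows "Pp h x \<le> Pp h y"
proof -
  have "\<And>n. Pp h n \<le> Pp h (Suc n)" using Pp_Suc[OF assms(1)] by simp
  from lift_Suc_mono_le[of "Pp h", OF this assms(2)] show ?thesis .
qed

lemma Pp_conv: assumes "0 < h" "0 < y" "y \<le> Suc x"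
  shows "Pp h y + Pp h x \<le> Pp h (y - 1) + Pp h (Suc x)"
proof -
  have "Pp h y = Pp h (y - 1) + Dl h (y - 1)" using Pp_Suc[OF assms(1), of "y - 1"] assms by simp
  moreover have "Pp h (Suc x) = Pp h x + Dl h x" using Pp_Suc assms by simp
  moreover have "Dl h (y - 1) \<le> Dl h x" using Dl_mono assms by simp
  ultimately show ?thesis by simp
qed

lemma Pp_small: "m < h \<Longrightarrow> Pp h m = 0"
  unfolding Pp_def by simp

lemma Pp_split: assumes "2 \<le> k" shows "Pp k n = sz k n 0 * Pp (k - 1) (n - sz k n 0)"
proof -
  define q r where "q = n div k" and "r = n mod k"
  have n: "n = q * k + r" and r: "r < k" using assms by (simp_all add: q_def r_def)
  show ?thesis
  proof (cases "r = 0")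
    case True
    then have "sz k n 0 = q" unfolding sz_def q_def r_def by simp
    moreover have "n - q = q * (k - 1) + 0" using n True by (simp add: algebra_simps)
    moreover have "Pp k n = q ^ k" using n True Pp_qr[of 0 k q] r by simp
    moreover have "Pp (k - 1) (q * (k - 1) + 0) = q ^ (k - 1)" using Pp_qr[of 0 "k - 1" q] assms by simp
    moreover have "q ^ k = q * q ^ (k - 1)" using assms by (cases k) simp_all
    ultimately show ?thesis by simp
  next
    case False
    then have "sz k n 0 = Suc q" unfolding sz_def q_def r_def by simp
    moreover have "n - Suc q = q * (k - 1) + (r - 1)" using n False assms by (cases k) (simp_all add: algebra_simps)
    moreover have "Pp k n = q ^ (k - r) * Suc q ^ r" unfolding n by (rule Pp_qr[OF r])
    moreover have "Pp (k - 1) (q * (k - 1) + (r - 1)) = q ^ (k - 1 - (r - 1)) * Suc q ^ (r - 1)"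
      using Pp_qr[of "r - 1" "k - 1" q] r False by simp
    moreover have "k - 1 - (r - 1) = k - r" using False r by simp
    moreover have "Suc q ^ r = Suc q * Suc q ^ (r - 1)" using False by (cases r) simp_all
    ultimately show ?thesis by (simp add: algebra_simps)
  qed
qed



lemma two_split:
  fixes u :: "'b \<Rightarrow> nat"
  assumes "finite J" "a \<in> J" "b \<in> J" "a \<noteq> b"
  shows "sum u J = u a + u b + sum u (J - {a, b})" and "prod u J = u a * u b * prod u (J - {a,b})"
proof -
  have e: "J - {a} - {b} = J - {a, b}" by auto
  have b: "b \<in> J - {a}" using assms by simp
  show "sum u J = u a + u b + sum u (J - {a, b})"
    using sum.remove[OF assms(1,2), of u] sum.remove[OF _ b, of u] assms(1) e by simp
  show "prod u J = u a * u b * prod u (J - {a,b})"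
    using prod.remove[OF assms(1,2), of u] prod.remove[OF _ b, of u] assms(1) e by simp
qed

lemma prod_le_Pp:
  fixes f :: "'b \<Rightarrow> nat"
  assumes "finite J" "card J = h" "0 < h"
  shows "prod f J \<le> Pp h (sum f J)"
  using assms
proof (induction "sum (\<lambda>j. f j ^ 2) J" arbitrary: f rule: less_induct)
  case less
  show ?case
  proof (cases "\<exists>a\<in>J. \<exists>b\<in>J. f b + 2 \<le> f a")
    case True
    then obtain a b where ab: "a \<in> J" "b \<in> J" "f b + 2 \<le> f a" by blast
    then have anb: "a \<noteq> b" by auto
    define g where "g = f(a := f a - 1, b := f b + 1)"
    have ga: "g a = f a - 1" and gb: "g b = f b + 1" using anb by (simp_all add: g_def)
    have rest: "\<And>u. u \<in> J - {a,b} \<Longrightarrow> g u = f u" by (simp add: g_def)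
    obtain t where t: "f a = f b + 2 + t" using ab(3) le_Suc_ex by (metis add.commute)
    have s1: "sum g J = sum f J"
      using two_split(1)[OF less.prems(1) ab(1,2) anb, of g] two_split(1)[OF less.prems(1) ab(1,2) anb, of f]
        sum.cong[OF refl rest, of "J - {a,b}"] ga gb t by simp
    have s2: "sum (\<lambda>j. g j ^ 2) J < sum (\<lambda>j. f j ^ 2) J"
    proof -
      have r: "sum (\<lambda>j. g j ^ 2) (J - {a,b}) = sum (\<lambda>j. f j ^ 2) (J - {a,b})"
        using rest by simp
      have "g a ^ 2 + g b ^ 2 < f a ^ 2 + f b ^ 2"
        using ga gb t by (simp add: power2_eq_square algebra_simps)
      then show ?thesis
        using two_split(1)[OF less.prems(1) ab(1,2) anb, of "\<lambda>j. g j ^ 2"]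
          two_split(1)[OF less.prems(1) ab(1,2) anb, of "\<lambda>j. f j ^ 2"] r by simp
    qed
    have p: "prod f J \<le> prod g J"
    proof -
      have r: "prod g (J - {a,b}) = prod f (J - {a,b})"
        using rest by simp
      have "f a * f b \<le> g a * g b"
        using ga gb t by (simp add: algebra_simps)
      then show ?thesis
        using two_split(2)[OF less.prems(1) ab(1,2) anb, of g]
          two_split(2)[OF less.prems(1) ab(1,2) anb, of f] r by simp
    qed
    have "prod g J \<le> Pp h (sum g J)" using less.hyps[OF s2] less.prems by blast
    then show ?thesis using p s1 by simp
  next
    case False
    then have bal: "\<And>a b. a \<in> J \<Longrightarrow> b \<in> J \<Longrightarrow> f a \<le> f b + 1" by fastforce
    have ne: "J \<noteq> {}" using less.prems by auto
    define m0 where "m0 = Min (f ` J)"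
    have "m0 \<in> f ` J" unfolding m0_def using ne less.prems(1) by (simp add: Min_in)
    then obtain j0 where j0: "j0 \<in> J" "f j0 = m0" by auto
    have ge: "\<And>j. j \<in> J \<Longrightarrow> m0 \<le> f j" unfolding m0_def using less.prems(1) by simp
    define A where "A = {j. f j = m0}"
    have vA: "\<And>j. j \<in> J \<inter> A \<Longrightarrow> f j = m0" by (simp add: A_def)
    have vB: "\<And>j. j \<in> J - A \<Longrightarrow> f j = Suc m0"
      using bal[OF _ j0(1)] ge j0 by (fastforce simp: A_def)
    define s where "s = card (J - A)"
    have cA: "card (J \<inter> A) = h - s" "s < h"
    proof -
      have "card (J \<inter> A) + card (J - A) = card J"
        using less.prems(1) by (metis card_Int_Diff)
      moreover have "0 < card (J \<inter> A)" using j0 less.prems(1) by (auto simp: A_def card_gt_0_iff)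
      ultimately show "card (J \<inter> A) = h - s" "s < h" using less.prems(2) by (auto simp: s_def)
    qed
    have pr: "prod f J = m0 ^ (h - s) * Suc m0 ^ s"
    proof -
      have "prod f J = prod f (J \<inter> A) * prod f (J - A)" using prod.Int_Diff less.prems(1) by blast
      also have "prod f (J \<inter> A) = m0 ^ (h - s)" using vA cA by simp
      also have "prod f (J - A) = Suc m0 ^ s" using vB s_def by simp
      finally show ?thesis .
    qed
    have su: "sum f J = m0 * h + s"
    proof -
      have "sum f J = sum f (J \<inter> A) + sum f (J - A)" using sum.Int_Diff less.prems(1) by blast
      also have "sum f (J \<inter> A) = (h - s) * m0" using vA cA by simp
      also have "sum f (J - A) = s * Suc m0" using vB s_def by simp
      finally show ?thesis using cA(2) by (simp add: algebra_simps diff_mult_distrib)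
    qed
    show ?thesis using pr su Pp_qr[OF cA(2), of m0] by simp
  qed
qed



function Dk :: "nat \<Rightarrow> nat \<Rightarrow> nat" where
  "Dk k n = (if n < k \<or> k < 3 then 0 else Dk k (sz k n 0) + Pp (k - 1) (n - sz k n 0))"
  by auto
termination by (relation "measure (\<lambda>(k,n). n)") (auto intro: sz_less)
declare Dk.simps[simp del]

lemma Dk_small: "n < k \<Longrightarrow> Dk k n = 0"
  by (subst Dk.simps) simp

lemma Dk_rec: "3 \<le> k \<Longrightarrow> k \<le> n \<Longrightarrow> Dk k n = Dk k (cc k n) + Pp (k - 1) (n - cc k n)"
  by (subst Dk.simps) (simp add: cc_def)

lemma claim:
  assumes k: "3 \<le> k"
  shows "cc k n \<le> a \<Longrightarrow> a < n \<Longrightarrow> Dk k a + Pp (k - 1) (n - a) \<le> Dk k n"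
proof (induction n arbitrary: a rule: less_induct)
  case (less n a)
  note outer = less.IH
  have k0: "0 < k" and h0: "0 < k - 1" using k by auto
  show ?case
  proof (cases "n < k")
    case True
    have "0 < n" using less.prems by simp
    then have "0 < cc k n" using cc_pos k0 by blast
    then have "n - a < k - 1" using less.prems True by linarith
    then show ?thesis using Dk_small[of "a" k] Pp_small True less.prems by simp
  next
    case False
    then have kn: "k \<le> n" by simp
    have inner: "\<And>a. cc k n \<le> a \<Longrightarrow> a < n \<Longrightarrow> Dk k a + Pp (k - 1) (n - a) \<le> Dk k n"
    proof -
      fix a0 :: nat
      show "cc k n \<le> a0 \<Longrightarrow> a0 < n \<Longrightarrow> Dk k a0 + Pp (k - 1) (n - a0) \<le> Dk k n"
      proof (induction a0 rule: less_induct)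
        case (less a)
        show ?case
        proof (cases "a = cc k n")
          case True
          then show ?thesis using Dk_rec[OF k kn] by simp
        next
          case False
          then have ac: "cc k n < a" using less.prems by simp
          have IHa: "Dk k (a - 1) + Pp (k - 1) (n - (a - 1)) \<le> Dk k n"
            using less.IH[of "a - 1"] ac less.prems by simp
          show ?thesis
          proof (cases "a < k")
            case True
            have "Pp (k - 1) (n - a) \<le> Pp (k - 1) (n - (a - 1))" using Pp_mono h0 by simp
            then show ?thesis using IHa Dk_small[of a k] Dk_small[of "a - 1" k] True by simp
          next
            case False
            then have ka: "k \<le> a" by simp
            define a2 where "a2 = cc k a"
            define x where "x = n - a"
            define y where "y = a - a2"
            have Da: "Dk k a = Dk k a2 + Pp (k - 1) y" using Dk_rec[OF k ka] by (simp add: a2_def y_def)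
            have a2s: "a2 + 2 \<le> a" using cc_small[OF k ka] by (simp add: a2_def)
            have x1: "1 \<le> x" using less.prems by (simp add: x_def)
            show ?thesis
            proof (cases "y \<le> Suc x")
              case True
              have cv: "Pp (k - 1) y + Pp (k - 1) x \<le> Pp (k - 1) (y - 1) + Pp (k - 1) (Suc x)"
                using Pp_conv[OF h0 _ True] a2s by (simp add: y_def)
              have o: "Dk k a2 + Pp (k - 1) ((a - 1) - a2) \<le> Dk k (a - 1)"
              proof (rule outer[of "a - 1" a2])
                show "a - 1 < n" using less.prems by simp
                show "cc k (a - 1) \<le> a2" unfolding a2_def using cc_mono k0 by simp
                show "a2 < a - 1" using a2s by simp
              qed
              have "y - 1 = a - 1 - a2" "Suc x = n - (a - 1)" using a2s less.prems
                by (simp_all add: y_def x_def)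
              then show ?thesis using Da cv o IHa x_def by simp
            next
              case False
              define as where "as = a2 + x"
              have o: "Dk k a2 + Pp (k - 1) (as - a2) \<le> Dk k as"
              proof (rule outer[of as a2])
                show "as < n" using False less.prems by (simp add: as_def x_def y_def)
                have "a \<le> k * a2" unfolding a2_def using cc_ge k0 by blast
                then have "as \<le> k * a2" using False by (simp add: as_def y_def)
                then show "cc k as \<le> a2" using cc_le k0 by blast
                show "a2 < as" using x1 by (simp add: as_def)
              qed
              have i: "Dk k as + Pp (k - 1) (n - as) \<le> Dk k n"
              proof (rule less.IH)
                show "as < a" using False a2s by (simp add: as_def x_def y_def)
                show "cc k n \<le> as" using cc_shift[OF k0, of a n] less.prems
                  by (simp add: as_def x_def a2_def)
                show "as < n" using False less.prems by (simp add: as_def x_def y_def)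
              qed
              have "n - as = y" "as - a2 = x" using False less.prems a2s
                by (simp_all add: as_def x_def y_def)
              then show ?thesis using Da o i x_def by simp
            qed
          qed
        qed
      qed
    qed
    then show ?thesis using less.prems by blast
  qed
qed



lemma trans_count:
  assumes fin: "finite V" and un: "(\<Union>j<k. P j) = V"
    and dis: "\<forall>i<k. \<forall>j<k. i \<noteq> j \<longrightarrow> P i \<inter> P j = {}" and i: "i < k" and v: "v \<in> P i"
  shows "card {e \<in> transversal k V P. v \<in> e} = (\<Prod>j \<in> {..<k} - {i}. card (P j))"
proof -
  define K where "K = {..<k} - {i}"
  have Kk: "\<And>j. j \<in> K \<Longrightarrow> j < k \<and> j \<noteq> i" unfolding K_def by simp
  define g where "g f = insert v (f ` K)" for f :: "nat \<Rightarrow> 'a"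
  have uniq: "\<And>x j j'. j < k \<Longrightarrow> j' < k \<Longrightarrow> x \<in> P j \<Longrightarrow> x \<in> P j' \<Longrightarrow> j = j'"
  proof (rule ccontr)
    fix x j j' assume "j < k" "j' < k" "x \<in> P j" "x \<in> P j'" "j \<noteq> j'"
    then have "P j \<inter> P j' = {}" using dis by simp
    then show False using \<open>x \<in> P j\<close> \<open>x \<in> P j'\<close> by blast
  qed
  have sub: "\<And>j. j < k \<Longrightarrow> P j \<subseteq> V" using un by auto
  have vi: "\<And>j. j < k \<Longrightarrow> j \<noteq> i \<Longrightarrow> v \<notin> P j" using uniq v i by metis
  have fK: "f j \<in> P j" if "f \<in> PiE K P" "j \<in> K" for f j using that by auto
  have fK2: "j' = j" if "f \<in> PiE K P" "j \<in> K" "j' \<in> K" "f j' \<in> P j" for f j j'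
    using uniq[of j' j "f j'"] fK[OF that(1,3)] Kk[OF that(2)] Kk[OF that(3)] that(4) by simp
  have fKi: "f j' \<notin> P i" if "f \<in> PiE K P" "j' \<in> K" for f j'
    using uniq[of j' i "f j'"] fK[OF that] Kk[OF that(2)] i by auto
  have cut: "g f \<inter> P j = {f j}" if f: "f \<in> PiE K P" and j: "j \<in> K" for f j
  proof -
    have "v \<notin> P j" using vi Kk[OF j] by auto
    then show ?thesis unfolding g_def using j fK[OF f j] fK2[OF f j] by auto
  qed
  have cuti: "g f \<inter> P i = {v}" if f: "f \<in> PiE K P" for f
    unfolding g_def using v fKi[OF f] by auto
  have inj: "inj_on g (PiE K P)"
  proof (rule inj_onI)
    fix f1 f2 assume f1: "f1 \<in> PiE K P" and f2: "f2 \<in> PiE K P" and e: "g f1 = g f2"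
    show "f1 = f2"
    proof (rule PiE_ext[OF f1 f2])
      fix j assume j: "j \<in> K"
      have "{f1 j} = {f2 j}" using cut[OF f1 j] cut[OF f2 j] e by simp
      then show "f1 j = f2 j" by simp
    qed
  qed
  have img: "g ` PiE K P = {e \<in> transversal k V P. v \<in> e}"
  proof
    show "g ` PiE K P \<subseteq> {e \<in> transversal k V P. v \<in> e}"
    proof
      fix e assume "e \<in> g ` PiE K P"
      then obtain f where f: "f \<in> PiE K P" and e: "e = g f" by blast
      have "f ` K \<subseteq> V" using fK[OF f] sub Kk by blast
      then have "e \<subseteq> V" unfolding e g_def using sub v i by auto
      moreover have "card e = k"
      proof -
        have "inj_on f K"
          unfolding inj_on_def using fK[OF f] fK2[OF f] by metis
        then have "card (f ` K) = k - 1" unfolding K_def using i by (simp add: card_image)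
        moreover have "v \<notin> f ` K" using fKi[OF f] v by auto
        moreover have "finite (f ` K)" unfolding K_def by simp
        ultimately show ?thesis unfolding e g_def using i by simp
      qed
      moreover have "\<forall>j<k. card (e \<inter> P j) = 1"
      proof (intro allI impI)
        fix j assume j: "j < k"
        show "card (e \<inter> P j) = 1"
        proof (cases "j = i")
          case True
          then show ?thesis using cuti[OF f] unfolding e by simp
        next
          case False
          then have "j \<in> K" using j unfolding K_def by simp
          then show ?thesis using cut[OF f] unfolding e by simp
        qed
      qed
      moreover have "v \<in> e" unfolding e g_def by simp
      ultimately show "e \<in> {e \<in> transversal k V P. v \<in> e}" unfolding transversal_def by simp
    qed
  next
    show "{e \<in> transversal k V P. v \<in> e} \<subseteq> g ` PiE K P"
    proof
      fix e assume "e \<in> {e \<in> transversal k V P. v \<in> e}"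
      then have eV: "e \<subseteq> V" and c1: "\<And>j. j < k \<Longrightarrow> card (e \<inter> P j) = 1" and ve: "v \<in> e"
        unfolding transversal_def by auto
      have sing: "e \<inter> P j = {the_elem (e \<inter> P j)}" if j: "j < k" for j
      proof -
        obtain y where "e \<inter> P j = {y}" using c1[OF j] card_1_singleton_iff[of "e \<inter> P j"] by auto
        then show ?thesis by simp
      qed
      have mem: "the_elem (e \<inter> P j) \<in> e \<and> the_elem (e \<inter> P j) \<in> P j" if j: "j < k" for j
        using sing[OF j] by (metis Int_iff insertI1)
      define f where "f = restrict (\<lambda>j. the_elem (e \<inter> P j)) K"
      have fP: "f \<in> PiE K P"
        unfolding f_def using mem Kk by auto
      have "g f = e"
      proof
        show "g f \<subseteq> e" unfolding g_def f_def using ve mem Kk by auto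
        show "e \<subseteq> g f"
        proof
          fix x assume x: "x \<in> e"
          then obtain j where j: "j < k" "x \<in> P j" using eV un by blast
          show "x \<in> g f"
          proof (cases "j = i")
            case True
            have "x \<in> e \<inter> P i" "v \<in> e \<inter> P i" using x j True v ve by auto
            then have "x = v" using sing[OF i] by (metis singletonD)
            then show ?thesis unfolding g_def by simp
          next
            case False
            then have jK: "j \<in> K" using j unfolding K_def by simp
            have "x \<in> e \<inter> P j" using x j by auto
            then have "x = the_elem (e \<inter> P j)" using sing[OF j(1)] by auto
            then have "x = f j" unfolding f_def using jK by simp
            then show ?thesis unfolding g_def using jK by auto
          qed
        qed
      qed
      then show "e \<in> g ` PiE K P" using fP by blast
    qed
  qed
  have "card {e \<in> transversal k V P. v \<in> e} = card (PiE K P)"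
    using inj img card_image by fastforce
  also have "\<dots> = (\<Prod>j \<in> K. card (P j))" by (rule card_PiE) (simp add: K_def)
  finally show ?thesis unfolding K_def .
qed



lemma main_good:
  assumes k: "3 \<le> k"
  shows "good k V E v \<Longrightarrow> deg E v \<le> Dk k (card V)"
proof (induction rule: good.induct)
  case (base V v)
  then show ?case by (simp add: deg_def)
next
  case (step V P E i v)
  define n where "n = card V"
  define a where "a = card (P i)"
  define K where "K = {..<k} - {i}"
  have un: "(\<Union>j<k. P j) = V" and dis: "\<forall>i<k. \<forall>j<k. i \<noteq> j \<longrightarrow> P i \<inter> P j = {}"
    and lt: "\<forall>j<k. card (P j) < card V" using step.hyps(3) unfolding is_part_def by auto
  have sub: "\<And>j. j < k \<Longrightarrow> P j \<subseteq> V" using un by auto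
  have finP: "\<And>j. j < k \<Longrightarrow> finite (P j)" using sub step.hyps(1) finite_subset by blast
  have ss: "{e \<in> E. v \<in> e} \<subseteq> {e \<in> induced E (P i). v \<in> e} \<union> {e \<in> transversal k V P. v \<in> e}"
  proof
    fix e assume e: "e \<in> {e \<in> E. v \<in> e}"
    then have "e \<in> (\<Union>j<k. induced E (P j)) \<union> transversal k V P" using step.hyps(5) by blast
    then show "e \<in> {e \<in> induced E (P i). v \<in> e} \<union> {e \<in> transversal k V P. v \<in> e}"
    proof
      assume "e \<in> (\<Union>j<k. induced E (P j))"
      then obtain j where j: "j < k" "e \<in> induced E (P j)" by blast
      then have "v \<in> P j" using e unfolding induced_def by auto
      then have "j = i" using dis j(1) step.hyps(6,8) by blast
      then show ?thesis using j e by simp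
    next
      assume "e \<in> transversal k V P"
      then show ?thesis using e by simp
    qed
  qed
  have fin1: "finite {e \<in> induced E (P i). v \<in> e}"
  proof (rule finite_subset)
    show "{e \<in> induced E (P i). v \<in> e} \<subseteq> Pow (P i)" unfolding induced_def by auto
    show "finite (Pow (P i))" using finP step.hyps(6) by simp
  qed
  have fin2: "finite {e \<in> transversal k V P. v \<in> e}"
  proof (rule finite_subset)
    show "{e \<in> transversal k V P. v \<in> e} \<subseteq> Pow V" unfolding transversal_def by auto
    show "finite (Pow V)" using step.hyps(1) by simp
  qed
  have "deg E v \<le> card ({e \<in> induced E (P i). v \<in> e} \<union> {e \<in> transversal k V P. v \<in> e})"
    unfolding deg_def using ss fin1 fin2 by (simp add: card_mono)
  also have "\<dots> \<le> deg (induced E (P i)) v + card {e \<in> transversal k V P. v \<in> e}"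
    unfolding deg_def by (rule card_Un_le)
  finally have d1: "deg E v \<le> deg (induced E (P i)) v + card {e \<in> transversal k V P. v \<in> e}" .
  have tc: "card {e \<in> transversal k V P. v \<in> e} = (\<Prod>j \<in> K. card (P j))"
    unfolding K_def using trans_count[OF step.hyps(1) un dis step.hyps(6,8)] .
  have sumK: "(\<Sum>j<k. card (P j)) = n"
  proof -
    have "card (\<Union>j<k. P j) = (\<Sum>j<k. card (P j))"
      by (rule card_UN_disjoint) (use finP dis in auto)
    then show ?thesis using un n_def by simp
  qed
  have sumK2: "(\<Sum>j<k. card (P j)) = a + (\<Sum>j\<in>K. card (P j))"
    unfolding a_def K_def using sum.remove[of "{..<k}" i] step.hyps(6) by simp
  have "(\<Prod>j \<in> K. card (P j)) \<le> Pp (k - 1) (\<Sum>j\<in>K. card (P j))"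
    by (rule prod_le_Pp) (use step.hyps(6) k in \<open>auto simp: K_def\<close>)
  moreover have "(\<Sum>j\<in>K. card (P j)) = n - a" using sumK sumK2 by simp
  ultimately have tb: "card {e \<in> transversal k V P. v \<in> e} \<le> Pp (k - 1) (n - a)"
    using tc by simp
  have "n \<le> k * a"
  proof -
    have "(\<Sum>j<k. card (P j)) \<le> (\<Sum>j<k. a)" using step.hyps(7) unfolding a_def by (intro sum_mono) simp
    then show ?thesis using sumK by simp
  qed
  then have ca: "cc k n \<le> a" using cc_le k by simp
  have an: "a < n" using lt step.hyps(6) by (simp add: a_def n_def)
  have "deg E v \<le> Dk k a + Pp (k - 1) (n - a)" using d1 step.IH tb by (simp add: a_def)
  also have "\<dots> \<le> Dk k n" using claim[OF k ca an] .
  finally show ?case by (simp add: n_def)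
qed



lemma off_Suc: "off k n (Suc i) = off k n i + sz k n i" by (simp add: off_def)

lemma off_formula: "off k n i = i * (n div k) + min i (n mod k)"
  by (induction i) (auto simp: off_Suc sz_def off_def[of k n 0])

lemma off_k: "0 < k \<Longrightarrow> off k n k = n"
proof -
  assume "0 < k"
  then have "min k (n mod k) = n mod k" by simp
  then show ?thesis by (simp add: off_formula mult.commute)
qed

lemma off_mono: "i \<le> j \<Longrightarrow> off k n i \<le> off k n j"
  unfolding off_formula by (intro add_mono mult_le_mono1) auto

lemma ivl_union: "(\<Union>j<m. {off k n j..<off k n j + sz k n j}) = {0..<off k n m}"
proof (induction m)
  case 0 then show ?case by (simp add: off_def)
next
  case (Suc m)
  have "(\<Union>j<Suc m. {off k n j..<off k n j + sz k n j}) = {0..<off k n m} \<union> {off k n m..<off k n (Suc m)}"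
    using Suc by (simp add: lessThan_Suc off_Suc Un_commute)
  also have "\<dots> = {0..<off k n (Suc m)}" using off_mono[of m "Suc m" k n] by (auto)
  finally show ?case .
qed

lemma ivl_disj: "i \<noteq> j \<Longrightarrow> {off k n i..<off k n i + sz k n i} \<inter> {off k n j..<off k n j + sz k n j} = {}"
proof -
  assume "i \<noteq> j"
  then consider "Suc i \<le> j" | "Suc j \<le> i" by linarith
  then show ?thesis
  proof cases
    case 1 then show ?thesis using off_mono[OF 1, of k n] by (auto simp: off_Suc)
  next
    case 2 then show ?thesis using off_mono[OF 2, of k n] by (auto simp: off_Suc)
  qed
qed

lemma sz_max: "sz k n j \<le> sz k n 0" unfolding sz_def by auto

lemma sz_prod: assumes "0 < k" shows "(\<Prod>j<k. sz k n j) = Pp k n"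
proof -
  define q r where "q = n div k" and "r = n mod k"
  have r: "r < k" using assms by (simp add: r_def)
  have "(\<Prod>j<k. sz k n j) = (\<Prod>j\<in>{..<k} \<inter> {..<r}. sz k n j) * (\<Prod>j\<in>{..<k} - {..<r}. sz k n j)"
    by (rule prod.Int_Diff) simp
  also have "{..<k} \<inter> {..<r} = {..<r}" using r by auto
  also have "{..<k} - {..<r} = {r..<k}" by auto
  also have "(\<Prod>j\<in>{..<r}. sz k n j) = (\<Prod>j\<in>{..<r}. Suc q)"
    by (rule prod.cong) (auto simp: sz_def q_def r_def)
  also have "(\<Prod>j\<in>{r..<k}. sz k n j) = (\<Prod>j\<in>{r..<k}. q)"
    by (rule prod.cong) (auto simp: sz_def q_def r_def)
  finally show ?thesis by (simp add: Pp_def q_def r_def)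
qed

lemma Hk_sub: "e \<in> Hk k m \<Longrightarrow> e \<subseteq> {0..<m}"
proof (induction m arbitrary: e rule: less_induct)
  case (less m)
  show ?case
  proof (cases "m < k \<or> k < 3")
    case True
    then show ?thesis using less.prems by (subst (asm) Hk.simps) simp
  next
    case False
    then have k3: "3 \<le> k" and km: "k \<le> m" by auto
    have "e \<in> (\<Union>i<k. (\<lambda>e. (\<lambda>x. x + off k m i) ` e) ` Hk k (sz k m i)) \<or>
          e \<in> transversal k {0..<m} (\<lambda>i. {off k m i..<off k m i + sz k m i})"
      using less.prems False by (subst (asm) Hk.simps) auto
    then show ?thesis
    proof
      assume "e \<in> (\<Union>i<k. (\<lambda>e. (\<lambda>x. x + off k m i) ` e) ` Hk k (sz k m i))"
      then obtain i e0 where i: "i < k" and e0: "e0 \<in> Hk k (sz k m i)" and e: "e = (\<lambda>x. x + off k m i) ` e0"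
        by blast
      have "e0 \<subseteq> {0..<sz k m i}" using less.IH[OF sz_less[OF k3 km] e0] .
      moreover have "off k m i + sz k m i \<le> m"
      proof -
        have "off k m (Suc i) \<le> off k m k" using off_mono[of "Suc i" k k m] i by simp
        moreover have "off k m k = m" using off_k[of k m] k3 by simp
        ultimately show ?thesis by (simp only: off_Suc)
      qed
      ultimately show ?thesis unfolding e by auto
    next
      assume "e \<in> transversal k {0..<m} (\<lambda>i. {off k m i..<off k m i + sz k m i})"
      then show ?thesis unfolding transversal_def by auto
    qed
  qed
qed

lemma goodH_ex: "3 \<le> k \<Longrightarrow> 0 < n \<Longrightarrow> goodH k n 0"
proof (induction n rule: less_induct)
  case (less n)
  show ?case
  proof (cases "n < k")
    case True then show ?thesis using less.prems by (subst goodH.simps) simp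
  next
    case False
    then have kn: "k \<le> n" by simp
    have "0 < sz k n 0" using cc_pos[of k n] less.prems by (simp add: cc_def)
    then have "goodH k (sz k n 0) 0" using less.IH[OF sz_less[OF less.prems(1) kn] less.prems(1)] by blast
    moreover have "off k n 0 = 0" by (simp add: off_def)
    ultimately have "\<exists>i<k. (\<forall>j<k. sz k n j \<le> sz k n i) \<and> off k n i \<le> 0 \<and> 0 < off k n i + sz k n i \<and>
        goodH k (sz k n i) (0 - off k n i)"
      using less.prems \<open>0 < sz k n 0\<close> sz_max by (intro exI[of _ 0]) simp
    moreover have "\<not> (n < k \<or> k < 3)" using False less.prems by simp
    ultimately show ?thesis by (subst goodH.simps) (simp only: if_False)
  qed
qed



lemma HkD: assumes k3: "3 \<le> k" shows "goodH k n v \<Longrightarrow> Dk k n \<le> deg (Hk k n) v"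
proof (induction n arbitrary: v rule: less_induct)
  case (less n v)
  show ?case
  proof (cases "n < k")
    case True then show ?thesis by (simp add: Dk_small)
  next
    case False
    then have kn: "k \<le> n" by simp
    have k0: "0 < k" using k3 by simp
    have nc: "\<not> (n < k \<or> k < 3)" using False k3 by simp
    define I where "I = (\<lambda>j. {off k n j..<off k n j + sz k n j})"
    define sh where "sh = (\<lambda>j (e :: nat set). (\<lambda>x. x + off k n j) ` e)"
    have Hn: "Hk k n = (\<Union>j<k. sh j ` Hk k (sz k n j)) \<union> transversal k {0..<n} I"
      by (subst Hk.simps) (simp only: nc if_False sh_def I_def)
    have "\<exists>i<k. (\<forall>j<k. sz k n j \<le> sz k n i) \<and> off k n i \<le> v \<and> v < off k n i + sz k n i \<and>
        goodH k (sz k n i) (v - off k n i)"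
      using less.prems by (subst (asm) goodH.simps) (simp only: nc if_False)
    then obtain i where i: "i < k" and imax: "\<forall>j<k. sz k n j \<le> sz k n i" and vi1: "off k n i \<le> v"
      and vi2: "v < off k n i + sz k n i" and gi: "goodH k (sz k n i) (v - off k n i)" by blast
    have szi: "sz k n i = cc k n"
    proof -
      have "sz k n 0 \<le> sz k n i" using imax k0 by blast
      then show ?thesis unfolding cc_def using sz_max[of k n i] by (rule le_antisym[rotated])
    qed
    have vI: "v \<in> I i" using vi1 vi2 by (simp add: I_def)
    define A where "A = sh i ` {e \<in> Hk k (sz k n i). v - off k n i \<in> e}"
    define B where "B = {e \<in> transversal k {0..<n} I. v \<in> e}"
    have AH: "A \<subseteq> {e \<in> Hk k n. v \<in> e}"
    proof
      fix e assume "e \<in> A"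
      then obtain e0 where e0: "e0 \<in> Hk k (sz k n i)" "v - off k n i \<in> e0" and e: "e = sh i e0"
        unfolding A_def by blast
      have "e \<in> Hk k n" unfolding Hn using e0(1) e i by blast
      moreover have "v \<in> e" unfolding e sh_def using e0(2) vi1 by (metis image_eqI le_add_diff_inverse2)
      ultimately show "e \<in> {e \<in> Hk k n. v \<in> e}" by simp
    qed
    have BH: "B \<subseteq> {e \<in> Hk k n. v \<in> e}" unfolding B_def Hn by blast
    have finH: "finite {e \<in> Hk k n. v \<in> e}"
    proof (rule finite_subset)
      show "{e \<in> Hk k n. v \<in> e} \<subseteq> Pow {0..<n}" using Hk_sub by blast
    qed simp
    have disj: "A \<inter> B = {}"
    proof (rule ccontr)
      assume "A \<inter> B \<noteq> {}"
      then obtain e where eA: "e \<in> A" and eB: "e \<in> B" by blast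
      then obtain e0 where e0: "e0 \<in> Hk k (sz k n i)" and e: "e = sh i e0"
        unfolding A_def by blast
      have "e0 \<subseteq> {0..<sz k n i}" using Hk_sub[OF e0] .
      then have eI: "e \<subseteq> I i" unfolding e sh_def I_def by auto
      define j :: nat where "j = (if i = 0 then 1 else 0)"
      have j: "j < k" "j \<noteq> i" using k3 by (auto simp: j_def)
      have "card (e \<inter> I j) = 1" using eB j unfolding B_def transversal_def by auto
      moreover have "e \<inter> I j = {}" using eI ivl_disj[OF j(2), of k n] unfolding I_def by blast
      ultimately show False by simp
    qed
    have injsh: "inj_on (sh i) X" for X
      unfolding sh_def by (rule inj_onI) (simp add: inj_image_eq_iff inj_on_def)
    have cA: "card A = deg (Hk k (sz k n i)) (v - off k n i)"
      unfolding A_def deg_def by (rule card_image[OF injsh])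
    have un: "(\<Union>j<k. I j) = {0..<n}" unfolding I_def ivl_union off_k[OF k0] ..
    have dis: "\<forall>i<k. \<forall>j<k. i \<noteq> j \<longrightarrow> I i \<inter> I j = {}" unfolding I_def using ivl_disj by blast
    have cB: "card B = (\<Prod>j \<in> {..<k} - {i}. card (I j))"
      unfolding B_def by (rule trans_count[OF _ un dis i vI]) simp
    also have "\<dots> = (\<Prod>j \<in> {..<k} - {i}. sz k n j)" by (simp add: I_def)
    also have "\<dots> = Pp (k - 1) (n - cc k n)"
    proof -
      have "(\<Prod>j<k. sz k n j) = sz k n i * (\<Prod>j \<in> {..<k} - {i}. sz k n j)"
        using prod.remove[of "{..<k}" i] i by simp
      moreover have "(\<Prod>j<k. sz k n j) = cc k n * Pp (k - 1) (n - cc k n)"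
        using sz_prod[OF k0] Pp_split[of k n] k3 by (simp add: cc_def)
      moreover have "0 < cc k n" using cc_pos[OF k0] kn k3 by simp
      ultimately show ?thesis using szi by simp
    qed
    finally have cB': "card B = Pp (k - 1) (n - cc k n)" .
    have "Dk k n = Dk k (cc k n) + Pp (k - 1) (n - cc k n)" using Dk_rec[OF k3 kn] .
    also have "Dk k (cc k n) \<le> card A"
      using less.IH[OF _ gi] sz_less[OF k3 kn, of i] szi cA by simp
    also have "card A + Pp (k - 1) (n - cc k n) = card (A \<union> B)"
      using card_Un_disjoint[of A B] disj cB' finite_subset[OF AH finH] finite_subset[OF BH finH] by simp
    also have "\<dots> \<le> deg (Hk k n) v" unfolding deg_def using AH BH finH by (intro card_mono) auto
    finally show ?thesis by simp
  qed
qed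

lemma delta_ge: assumes "3 \<le> k" shows "Dk k n \<le> delta k n"
proof (cases "n = 0")
  case True then show ?thesis using assms by (simp add: Dk_small)
next
  case False
  then have "goodH k n 0" using goodH_ex[OF assms] by blast
  then have "goodH k n (SOME v. goodH k n v)" by (rule someI)
  then show ?thesis unfolding delta_def using HkD[OF assms] by blast
qed

theorem lemma5p4:
  fixes k :: nat and V :: "'a set" and E :: "'a set set" and v :: 'a
  assumes "3 \<le> k" and "inG k V E" and "good k V E v"
  shows "deg E v \<le> delta k (card V)"
  using main_good[OF assms(1) assms(3)] delta_ge[OF assms(1), of "card V"] by simp

end
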